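(* Let $0<\varepsilon_1<\varepsilon_2<1/2$. Then $\varepsilon_1<\phi(\varepsilon_1,\varepsilon_2)<\varepsilon_2$. Furthermore, let $\sigma\in[\varepsilon_1,\varepsilon_2]$ and let $p_1,p_2>0$ with $p_1+p_2\le1$. Then: 1. $(-p_2b_{\sigma,\varepsilon_2},\,p_1b_{\sigma,\varepsilon_1})=\big(-p_2(1-2\varepsilon_2)/(1-2\sigma),\,p_1\varepsilon_1/\sigma\big)$, and for every $x$ in this interval, $0<e_{\sigma,\varepsilon_1,p_1}(-x)<e_{\sigma,\varepsilon_2,p_2}(x)<1/2$. 2. If $\sigma\le\phi(\varepsilon_1,\varepsilon_2)$, then $F_{\sigma,\varepsilon_1,p_1,\varepsilon_2,p_2}$ is (strictly) decreasing on $(-p_2b_{\sigma,\varepsilon_2},0]$. 3. If $\sigma\ge\phi(\varepsilon_1,\varepsilon_2)$, then $F_{\sigma,\varepsilon_1,p_1,\varepsilon_2,p_2}$ is (strictly) increasing on $[0,p_1b_{\sigma,\varepsilon_1})$.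
   Context: Notation: $\overline a=1-a$; $\log$ is base 2. $f_c(t)=1+t\log t+\overline t\log\overline t$ for $t\in[0,1]$ (with $0\log0=0$). For $0<\varepsilon_1<\varepsilon_2<1/2$, $$\phi(\varepsilon_1,\varepsilon_2)=\frac{\ln(\overline{\varepsilon_1}/\overline{\varepsilon_2})}{\ln\big((\overline{\varepsilon_1}\varepsilon_2)/(\overline{\varepsilon_2}\varepsilon_1)\big)}.$$ For $\sigma\in(0,1/2)$ and $\varepsilon\in(0,1/2)$, $b_{\sigma,\varepsilon}=\min\{1,\varepsilon/\sigma,(1-2\varepsilon)/(1-2\sigma)\}$. For $p\in(0,1)$ and $x\in(-pb_{\sigma,\varepsilon},1-p)$, $e_{\sigma,\varepsilon,p}(x)=(p\varepsilon+x\sigma)/(p+x)$ and $f_{\sigma,\varepsilon,p}(x)=(p+x)f_c(e_{\sigma,\varepsilon,p}(x))$. For $\sigma$, $\varepsilon_1<\varepsilon_2$, $p_1,p_2$ as in the claim, $F_{\sigma,\varepsilon_1,p_1,\varepsilon_2,p_2}(x)=f_{\sigma,\varepsilon_1,p_1}(-x)+f_{\sigma,\varepsilon_2,p_2}(x)$ for $x\in(-p_2b_{\sigma,\varepsilon_2},p_1b_{\sigma,\varepsilon_1})$. *)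

theory Defs
  imports Complex_Main
begin

definition xlogx :: "real \<Rightarrow> real" where
  "xlogx t = (if t = 0 then 0 else t * log 2 t)"

definition fc :: "real \<Rightarrow> real" where
  "fc t = 1 + xlogx t + xlogx (1 - t)"

definition phi :: "real \<Rightarrow> real \<Rightarrow> real" where
  "phi e1 e2 = ln ((1 - e1) / (1 - e2)) / ln (((1 - e1) * e2) / ((1 - e2) * e1))"

definition bse :: "real \<Rightarrow> real \<Rightarrow> real" where
  "bse s e = min 1 (min (e / s) ((1 - 2 * e) / (1 - 2 * s)))"

definition ef :: "real \<Rightarrow> real \<Rightarrow> real \<Rightarrow> real \<Rightarrow> real" where
  "ef s e p x = (p * e + x * s) / (p + x)"

definition ff :: "real \<Rightarrow> real \<Rightarrow> real \<Rightarrow> real \<Rightarrow> real" where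
  "ff s e p x = (p + x) * fc (ef s e p x)"

definition FF :: "real \<Rightarrow> real \<Rightarrow> real \<Rightarrow> real \<Rightarrow> real \<Rightarrow> real \<Rightarrow> real" where
  "FF s e1 p1 e2 p2 x = ff s e1 p1 (- x) + ff s e2 p2 x"

end

theory Submission
  imports Defs
begin

definition GG :: "real \<Rightarrow> real \<Rightarrow> real" where
  "GG s t = s * ln t + (1 - s) * ln (1 - t)"

definition kk :: "real \<Rightarrow> real \<Rightarrow> real \<Rightarrow> real \<Rightarrow> real" where
  "kk s e p x = (p*e + x*s) * ln (p*e + x*s) + (p*(1-e) + x*(1-s)) * ln (p*(1-e) + x*(1-s))
     - (p + x) * ln (p + x)"

lemma ln_gt_aux: "0 < (x::real) \<Longrightarrow> 0 < y \<Longrightarrow> x \<noteq> y \<Longrightarrow> (x - y) / x < ln x - ln y"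
  using ln_diff_less[of y x] by (simp add: divide_simps left_diff_distrib)

lemma ln_ge_aux: "0 < (x::real) \<Longrightarrow> 0 < y \<Longrightarrow> (x - y) / x \<le> ln x - ln y"
  using ln_diff_le[of y x] by (simp add: divide_simps left_diff_distrib)

lemma GG_inc:
  assumes "0 < t" "t < u" "u \<le> s" "s < 1"
  shows "GG s t < GG s u"
proof -
  have u1: "u < 1" using assms by linarith
  have a: "(u - t) / u < ln u - ln t" using ln_gt_aux[of u t] assms by simp
  have b: "((1-u) - (1-t)) / (1-u) \<le> ln (1-u) - ln (1-t)" using ln_ge_aux[of "1-u" "1-t"] assms u1 by simp
  have s0: "0 \<le> s" using assms by linarith
  have "s * ((u - t) / u) + (1-s) * (((1-u) - (1-t)) / (1-u)) = (u-t)*(s-u)/(u*(1-u))"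
    using assms u1 by (simp add: field_simps)
  also have "... \<ge> 0" using assms u1 by (intro divide_nonneg_pos mult_nonneg_nonneg) auto
  finally have c: "0 \<le> s * ((u - t) / u) + (1-s) * (((1-u) - (1-t)) / (1-u))" .
  have "s * ((u - t) / u) \<le> s * (ln u - ln t)" using a s0 by (intro mult_left_mono) auto
  moreover have "(1-s) * (((1-u) - (1-t)) / (1-u)) \<le> (1-s) * (ln (1-u) - ln (1-t))"
    using b assms by (intro mult_left_mono) auto
  moreover have "s * ((u - t) / u) < s * (ln u - ln t) \<or> (1-s) * (((1-u) - (1-t)) / (1-u)) < (1-s) * (ln (1-u) - ln (1-t))"
    using a assms by (intro disjI1 mult_strict_left_mono) auto
  ultimately show ?thesis using c unfolding GG_def by (simp add: algebra_simps) linarith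
qed

lemma GG_sym: "GG s t = GG (1 - s) (1 - t)"
  unfolding GG_def by simp

lemma GG_dec:
  assumes "0 < s" "s \<le> t" "t < u" "u < 1"
  shows "GG s u < GG s t"
  using GG_inc[of "1-u" "1-t" "1-s"] assms GG_sym[of s t] GG_sym[of s u] by simp

lemma GG_inc_le:
  assumes "0 < t" "t \<le> u" "u \<le> s" "s < 1"
  shows "GG s t \<le> GG s u"
  using GG_inc[of t u s] assms by (cases "t = u") auto

lemma GG_dec_le:
  assumes "0 < s" "s \<le> t" "t \<le> u" "u < 1"
  shows "GG s u \<le> GG s t"
  using GG_dec[of s t u] assms by (cases "t = u") auto

lemma ff_kk:
  assumes "0 < p*e + x*s" "0 < p*(1-e) + x*(1-s)"
  shows "ff s e p x = (p + x) + kk s e p x / ln 2"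
proof -
  define a where "a = p*e + x*s"
  define b where "b = p*(1-e) + x*(1-s)"
  have ab: "p + x = a + b" unfolding a_def b_def by (simp add: algebra_simps)
  have a0: "a > 0" "b > 0" using assms a_def b_def by auto
  have e: "ef s e p x = a / (a+b)" using ab by (simp add: ef_def a_def[symmetric])
  have e1: "1 - a / (a+b) = b / (a+b)" using a0 by (simp add: field_simps)
  have "ff s e p x = (a+b) * (1 + a/(a+b) * log 2 (a/(a+b)) + b/(a+b) * log 2 (b/(a+b)))"
    unfolding ff_def fc_def xlogx_def e e1 ab using a0 by simp
  also have "... = (a+b) + (a * ln (a/(a+b)) + b * ln (b/(a+b))) / ln 2"
  proof -
    have ne: "a + b \<noteq> 0" using a0 by simp
    have "(a+b) * (a/(a+b) * log 2 (a/(a+b))) = a * ln (a/(a+b)) / ln 2"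
      using ne by (simp add: log_def)
    moreover have "(a+b) * (b/(a+b) * log 2 (b/(a+b))) = b * ln (b/(a+b)) / ln 2"
      using ne by (simp add: log_def)
    ultimately show ?thesis by (simp add: distrib_left add_divide_distrib)
  qed
  also have "... = (a+b) + (a * ln a + b * ln b - (a+b) * ln (a+b)) / ln 2"
    using a0 by (simp add: ln_div algebra_simps)
  finally show ?thesis unfolding kk_def a_def[symmetric] b_def[symmetric] ab .
qed

lemma kk_deriv:
  assumes "0 < p*e + x*s" "0 < p*(1-e) + x*(1-s)"
  shows "(kk s e p has_real_derivative GG s (ef s e p x)) (at x)"
proof -
  define a where "a = p*e + x*s"
  define b where "b = p*(1-e) + x*(1-s)"
  have ab: "p + x = a + b" unfolding a_def b_def by (simp add: algebra_simps)
  have a0: "a > 0" "b > 0" using assms a_def b_def by auto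
  have e: "ef s e p x = a / (a+b)" using ab by (simp add: ef_def a_def[symmetric])
  have e1: "1 - a / (a+b) = b / (a+b)" using a0 by (simp add: field_simps)
  have "(kk s e p has_real_derivative
     (s * ln a + a * (s / a)) + ((1-s) * ln b + b * ((1-s)/b)) - (1 * ln (a+b) + (a+b) * (1/(a+b)))) (at x)"
    unfolding kk_def[abs_def] using a0 ab
    by (auto intro!: derivative_eq_intros simp: a_def[symmetric] b_def[symmetric])
  moreover have "(s * ln a + a * (s / a)) + ((1-s) * ln b + b * ((1-s)/b)) - (1 * ln (a+b) + (a+b) * (1/(a+b)))
      = GG s (ef s e p x)"
    unfolding GG_def e e1 using a0 by (simp add: ln_div algebra_simps) (simp add: field_simps)
  ultimately show ?thesis by simp
qed

lemma dom_facts: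
  fixes e1 e2 s p1 p2 x :: real
  assumes "0 < e1" "e1 < e2" "e2 < 1/2" "e1 \<le> s" "s \<le> e2" "0 < p1" "0 < p2"
    and xl: "- p2 * (1 - 2 * e2) / (1 - 2 * s) < x" and xr: "x < p1 * e1 / s"
  shows "0 < p1*e1 + (-x)*s" "0 < p1*(1-e1) + (-x)*(1-s)"
        "0 < p2*e2 + x*s" "0 < p2*(1-e2) + x*(1-s)" "2*(p2*e2 + x*s) < p2 + x"
proof -
  have s0: "0 < s" and s1: "0 < 1 - 2*s" using assms by auto
  have a1: "x * s < p1 * e1" using xr s0 by (simp add: pos_less_divide_eq)
  have a2: "- p2 * (1 - 2 * e2) < x * (1 - 2*s)" using xl pos_divide_less_eq[OF s1] by blast
  show "0 < p1*e1 + (-x)*s" using a1 by simp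
  show "0 < p1*(1-e1) + (-x)*(1-s)"
  proof (cases "x \<le> 0")
    case True
    then have "x * (1-s) \<le> 0" using s1 by (simp add: mult_nonpos_nonneg)
    moreover have "0 < p1*(1-e1)" using assms by simp
    ultimately show ?thesis by simp
  next
    case False
    have "x*s*(1-s) < p1*e1*(1-s)" using a1 s1 by (intro mult_strict_right_mono) auto
    moreover have "p1*e1*(1-s) \<le> p1*(1-e1)*s"
    proof -
      have "p1*e1 \<le> p1*s" using assms by (intro mult_left_mono) auto
      then show ?thesis by (simp add: algebra_simps)
    qed
    ultimately have "x*(1-s)*s < p1*(1-e1)*s" by (simp add: algebra_simps)
    then have "x*(1-s) < p1*(1-e1)" using s0 by simp
    then show ?thesis by simp
  qed
  show c3: "0 < p2*e2 + x*s"
  proof (cases "0 \<le> x")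
    case True
    then show ?thesis using assms s0 by (simp add: add_pos_nonneg)
  next
    case False
    have "- p2 * (1 - 2 * e2) * s < x * (1 - 2*s) * s" using a2 s0 by (intro mult_strict_right_mono) auto
    moreover have "- p2 * e2 * (1 - 2*s) \<le> - p2 * (1 - 2 * e2) * s"
    proof -
      have "p2*s \<le> p2*e2" using assms by (intro mult_left_mono) auto
      then show ?thesis by (simp add: algebra_simps)
    qed
    ultimately have "0 < (p2*e2 + x*s) * (1 - 2*s)" by (simp add: algebra_simps)
    then show ?thesis using s1 by (simp add: zero_less_mult_iff)
  qed
  show c5: "2*(p2*e2 + x*s) < p2 + x" using a2 by (simp add: algebra_simps)
  show "0 < p2*(1-e2) + x*(1-s)" using c3 c5 by (simp add: algebra_simps)
qed

lemma ef_cmp: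
  assumes "0 < p + x"
  shows "ef s e p x < c \<longleftrightarrow> p*e + x*s < c*(p+x)"
    and "c < ef s e p x \<longleftrightarrow> c*(p+x) < p*e + x*s"
    and "ef s e p x \<le> c \<longleftrightarrow> p*e + x*s \<le> c*(p+x)"
    and "c \<le> ef s e p x \<longleftrightarrow> c*(p+x) \<le> p*e + x*s"
  using assms unfolding ef_def
  by (simp_all add: pos_divide_less_eq pos_less_divide_eq pos_divide_le_eq pos_le_divide_eq)

lemma phi_facts:
  fixes e1 e2 :: real
  assumes "0 < e1" "e1 < e2" "e2 < 1/2"
  defines "A \<equiv> ln (1-e1) - ln (1-e2)" and "B \<equiv> ln e2 - ln e1"
  shows "phi e1 e2 = A / (A + B)" "0 < A" "0 < B" "e1 * (A + B) < A" "A < e2 * (A + B)"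
proof -
  have p: "0 < 1 - e1" "0 < 1 - e2" "0 < e2" using assms by auto
  have "ln (((1 - e1) * e2) / ((1 - e2) * e1)) = A + B"
    unfolding A_def B_def using assms p by (simp add: ln_div ln_mult)
  moreover have "ln ((1 - e1) / (1 - e2)) = A" unfolding A_def using p by (simp add: ln_div)
  ultimately show "phi e1 e2 = A / (A + B)" unfolding phi_def by simp
  show "0 < A" unfolding A_def using assms p by simp
  show "0 < B" unfolding B_def using assms p by simp
  have k1: "ln e2 - ln e1 < (e2 - e1) / e1" using ln_diff_less[of e2 e1] assms by simp
  have k2: "ln (1-e2) - ln (1-e1) < ((1-e2) - (1-e1)) / (1-e1)" using ln_diff_less[of "1-e2" "1-e1"] assms p by simp
  have "e1 * (ln e2 - ln e1) < e2 - e1" using mult_strict_left_mono[OF k1 assms(1)] assms by simp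
  moreover have "(1-e1) * (ln (1-e2) - ln (1-e1)) < e1 - e2" using mult_strict_left_mono[OF k2 p(1)] p by simp
  ultimately show "e1 * (A + B) < A" unfolding A_def B_def by (simp add: algebra_simps)
  have k3: "ln e1 - ln e2 < (e1 - e2) / e2" using ln_diff_less[of e1 e2] assms by simp
  have k4: "ln (1-e1) - ln (1-e2) < ((1-e1) - (1-e2)) / (1-e2)" using ln_diff_less[of "1-e1" "1-e2"] assms p by simp
  have "e2 * (ln e1 - ln e2) < e1 - e2" using mult_strict_left_mono[OF k3 p(3)] p by simp
  moreover have "(1-e2) * (ln (1-e1) - ln (1-e2)) < e2 - e1" using mult_strict_left_mono[OF k4 p(2)] p by simp
  ultimately show "A < e2 * (A + B)" unfolding A_def B_def by (simp add: algebra_simps)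
qed

theorem lemma7:
  fixes e1 e2 :: real
  assumes "0 < e1" and "e1 < e2" and "e2 < 1/2"
  shows "e1 < phi e1 e2 \<and> phi e1 e2 < e2 \<and>
    (\<forall>s p1 p2. e1 \<le> s \<and> s \<le> e2 \<and> 0 < p1 \<and> 0 < p2 \<and> p1 + p2 \<le> 1 \<longrightarrow>
      ({- p2 * bse s e2 <..< p1 * bse s e1} = {- p2 * (1 - 2 * e2) / (1 - 2 * s) <..< p1 * e1 / s}
       \<and> (\<forall>x\<in>{- p2 * bse s e2 <..< p1 * bse s e1}.
            0 < ef s e1 p1 (- x) \<and> ef s e1 p1 (- x) < ef s e2 p2 x \<and> ef s e2 p2 x < 1/2))
      \<and> (s \<le> phi e1 e2 \<longrightarrow>
            (\<forall>x y. x \<in> {- p2 * bse s e2 <.. 0} \<and> y \<in> {- p2 * bse s e2 <.. 0} \<and> x < y \<longrightarrow>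
               FF s e1 p1 e2 p2 y < FF s e1 p1 e2 p2 x))
      \<and> (phi e1 e2 \<le> s \<longrightarrow>
            (\<forall>x y. x \<in> {0 ..< p1 * bse s e1} \<and> y \<in> {0 ..< p1 * bse s e1} \<and> x < y \<longrightarrow>
               FF s e1 p1 e2 p2 x < FF s e1 p1 e2 p2 y)))"
proof -
  define A where "A = ln (1-e1) - ln (1-e2)"
  define B where "B = ln e2 - ln e1"
  have PF: "phi e1 e2 = A / (A + B)" "0 < A" "0 < B" "e1 * (A + B) < A" "A < e2 * (A + B)"
    using phi_facts[OF assms] unfolding A_def B_def by auto
  have AB: "0 < A + B" using PF by simp
  have ph1: "e1 < phi e1 e2" using PF AB by (simp add: pos_less_divide_eq)
  have ph2: "phi e1 e2 < e2" using PF AB by (simp add: pos_divide_less_eq)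
  have main: "({- p2 * bse s e2 <..< p1 * bse s e1} = {- p2 * (1 - 2 * e2) / (1 - 2 * s) <..< p1 * e1 / s}
       \<and> (\<forall>x\<in>{- p2 * bse s e2 <..< p1 * bse s e1}.
            0 < ef s e1 p1 (- x) \<and> ef s e1 p1 (- x) < ef s e2 p2 x \<and> ef s e2 p2 x < 1/2))
      \<and> (s \<le> phi e1 e2 \<longrightarrow>
            (\<forall>x y. x \<in> {- p2 * bse s e2 <.. 0} \<and> y \<in> {- p2 * bse s e2 <.. 0} \<and> x < y \<longrightarrow>
               FF s e1 p1 e2 p2 y < FF s e1 p1 e2 p2 x))
      \<and> (phi e1 e2 \<le> s \<longrightarrow>
            (\<forall>x y. x \<in> {0 ..< p1 * bse s e1} \<and> y \<in> {0 ..< p1 * bse s e1} \<and> x < y \<longrightarrow>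
               FF s e1 p1 e2 p2 x < FF s e1 p1 e2 p2 y))"
    if H: "e1 \<le> s" "s \<le> e2" "0 < p1" "0 < p2" for s p1 p2
  proof -
    have s0: "0 < s" and s1: "0 < 1 - 2*s" and s1': "s < 1" using H assms by auto
    have "e1/s \<le> 1" using H s0 by simp
    moreover have "1 \<le> (1-2*e1)/(1-2*s)" using H s1 by simp
    ultimately have b1: "bse s e1 = e1/s" unfolding bse_def by (simp add: min_def)
    have "(1-2*e2)/(1-2*s) \<le> 1" using H s1 by simp
    moreover have "1 \<le> e2/s" using H s0 by simp
    ultimately have b2: "bse s e2 = (1-2*e2)/(1-2*s)" unfolding bse_def
      by (metis min.absorb2 order.trans)
    define L where "L = - p2 * (1 - 2 * e2) / (1 - 2 * s)"
    define R where "R = p1 * e1 / s"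
    have Lb: "- p2 * bse s e2 = L" unfolding L_def b2 by simp
    have Rb: "p1 * bse s e1 = R" unfolding R_def b1 by simp
    have L0: "L < 0" unfolding L_def using H assms s1 by (simp add: divide_pos_pos)
    have R0: "0 < R" unfolding R_def using H assms s0 by simp
    note D = dom_facts[OF assms H(1,2,3,4), folded L_def R_def]
    define E1 where "E1 x = ef s e1 p1 (-x)" for x
    define E2 where "E2 x = ef s e2 p2 x" for x
    have d1: "0 < p1 + - x" if "L < x" "x < R" for x using D(1,2)[OF that] by (simp add: algebra_simps)
    have d2: "0 < p2 + x" if "L < x" "x < R" for x using D(3,4)[OF that] by (simp add: algebra_simps)
    have E1pos: "0 < E1 x" if "L < x" "x < R" for x
      unfolding E1_def using ef_cmp(2)[OF d1[OF that], of 0] D(1)[OF that] by simp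
    have E1s: "E1 x \<le> s" if "L < x" "x < R" for x
    proof -
      have "p1*e1 \<le> p1*s" using H by (intro mult_left_mono) auto
      then show ?thesis unfolding E1_def using ef_cmp(3)[OF d1[OF that]] by (simp add: algebra_simps)
    qed
    have E1s': "E1 x < s" if "L < x" "x < R" "e1 < s" for x
    proof -
      have "p1*e1 < p1*s" using H that by (intro mult_strict_left_mono) auto
      then show ?thesis unfolding E1_def using ef_cmp(1)[OF d1[OF that(1,2)]] by (simp add: algebra_simps)
    qed
    have E2s: "s \<le> E2 x" if "L < x" "x < R" for x
    proof -
      have "p2*s \<le> p2*e2" using H by (intro mult_left_mono) auto
      then show ?thesis unfolding E2_def using ef_cmp(4)[OF d2[OF that]] by (simp add: algebra_simps)
    qed
    have E2s': "s < E2 x" if "L < x" "x < R" "s < e2" for x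
    proof -
      have "p2*s < p2*e2" using H that by (intro mult_strict_left_mono) auto
      then show ?thesis unfolding E2_def using ef_cmp(2)[OF d2[OF that(1,2)]] by (simp add: algebra_simps)
    qed
    have E2h: "E2 x < 1/2" if "L < x" "x < R" for x
      unfolding E2_def using ef_cmp(1)[OF d2[OF that], of _ _ "1/2"] D(5)[OF that] by (simp add: algebra_simps)
    have E12: "E1 x < E2 x" if "L < x" "x < R" for x
    proof (cases "e1 < s")
      case True
      then show ?thesis using E1s'[OF that True] E2s[OF that] by simp
    next
      case False
      then have "s < e2" using H assms by simp
      then show ?thesis using E1s[OF that] E2s'[OF that] by simp
    qed
    have E1a: "E1 x \<le> e1" if "L < x" "x < R" "0 \<le> x" for x
    proof -
      have "e1*x \<le> s*x" using H that by (intro mult_right_mono) auto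
      then show ?thesis unfolding E1_def using ef_cmp(3)[OF d1[OF that(1,2)]] by (simp add: algebra_simps)
    qed
    have E1a': "E1 x < e1" if "L < x" "x < R" "0 < x" "e1 < s" for x
    proof -
      have "e1*x < s*x" using H that by (intro mult_strict_right_mono) auto
      then show ?thesis unfolding E1_def using ef_cmp(1)[OF d1[OF that(1,2)]] by (simp add: algebra_simps)
    qed
    have E2a: "E2 x \<le> e2" if "L < x" "x < R" "0 \<le> x" for x
    proof -
      have "s*x \<le> e2*x" using H that by (intro mult_right_mono) auto
      then show ?thesis unfolding E2_def using ef_cmp(3)[OF d2[OF that(1,2)]] by (simp add: algebra_simps)
    qed
    have E2a': "E2 x < e2" if "L < x" "x < R" "0 < x" "s < e2" for x
    proof -
      have "s*x < e2*x" using H that by (intro mult_strict_right_mono) auto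
      then show ?thesis unfolding E2_def using ef_cmp(1)[OF d2[OF that(1,2)]] by (simp add: algebra_simps)
    qed
    have E1b: "e1 \<le> E1 x" if "L < x" "x < R" "x \<le> 0" for x
    proof -
      have "s*x \<le> e1*x" using H that by (intro mult_right_mono_neg) auto
      then show ?thesis unfolding E1_def using ef_cmp(4)[OF d1[OF that(1,2)]] by (simp add: algebra_simps)
    qed
    have E1b': "e1 < E1 x" if "L < x" "x < R" "x < 0" "e1 < s" for x
    proof -
      have "s*x < e1*x" using H that by (intro mult_strict_right_mono_neg) auto
      then show ?thesis unfolding E1_def using ef_cmp(2)[OF d1[OF that(1,2)]] by (simp add: algebra_simps)
    qed
    have E2b: "e2 \<le> E2 x" if "L < x" "x < R" "x \<le> 0" for x
    proof -
      have "e2*x \<le> s*x" using H that by (intro mult_right_mono_neg) auto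
      then show ?thesis unfolding E2_def using ef_cmp(4)[OF d2[OF that(1,2)]] by (simp add: algebra_simps)
    qed
    have E2b': "e2 < E2 x" if "L < x" "x < R" "x < 0" "s < e2" for x
    proof -
      have "e2*x < s*x" using H that by (intro mult_strict_right_mono_neg) auto
      then show ?thesis unfolding E2_def using ef_cmp(2)[OF d2[OF that(1,2)]] by (simp add: algebra_simps)
    qed
    define K where "K x = kk s e1 p1 (-x) + kk s e2 p2 x" for x
    have KD: "(K has_real_derivative (GG s (E2 x) - GG s (E1 x))) (at x)" if "L < x" "x < R" for x
    proof -
      have "((\<lambda>x. kk s e1 p1 (-x)) has_real_derivative GG s (E1 x) * (-1)) (at x)"
        unfolding E1_def
        by (rule DERIV_chain2[OF kk_deriv]) (use D(1,2)[OF that] in \<open>auto intro!: derivative_eq_intros\<close>)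
      moreover have "(kk s e2 p2 has_real_derivative GG s (E2 x)) (at x)"
        unfolding E2_def using kk_deriv D(3,4)[OF that] by auto
      ultimately have "((\<lambda>x. kk s e1 p1 (-x) + kk s e2 p2 x) has_real_derivative GG s (E1 x) * (-1) + GG s (E2 x)) (at x)"
        by (rule DERIV_add)
      then show ?thesis unfolding K_def[abs_def] by simp
    qed
    have Kc: "continuous_on {a..b} K" if "L < a" "b < R" for a b
      using that by (intro continuous_at_imp_continuous_on ballI DERIV_isCont[OF KD]) auto
    have FFK: "FF s e1 p1 e2 p2 x = (p1+p2) + K x / ln 2" if "L < x" "x < R" for x
      unfolding FF_def K_def using ff_kk[OF D(1,2)[OF that]] ff_kk[OF D(3,4)[OF that]]
      by (simp add: add_divide_distrib)
    have GGd: "GG s e2 - GG s e1 = s*(A+B) - A" unfolding GG_def A_def B_def by (simp add: algebra_simps)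
    have ln2: "0 < ln (2::real)" by simp
    have inc: "FF s e1 p1 e2 p2 x < FF s e1 p1 e2 p2 y" if "phi e1 e2 \<le> s" "0 \<le> x" "x < y" "y < R" for x y
    proof -
      have "A \<le> s*(A+B)" using that(1) PF(1) AB by (simp add: pos_divide_le_eq)
      then have g0: "GG s e1 \<le> GG s e2" using GGd by simp
      have "K x < K y"
      proof (rule DERIV_pos_imp_increasing_open[OF that(3)])
        fix t assume t: "x < t" "t < y"
        have tL: "L < t" "t < R" "0 < t" using t that L0 by auto
        have "GG s (E1 t) \<le> GG s e1" using GG_inc_le[OF E1pos[OF tL(1,2)] E1a[OF tL(1,2)] H(1) s1'] tL by simp
        moreover have "GG s e2 \<le> GG s (E2 t)" using GG_dec_le[OF s0 E2s[OF tL(1,2)] E2a[OF tL(1,2)]] tL assms by simp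
        moreover have "GG s (E1 t) < GG s e1 \<or> GG s e2 < GG s (E2 t)"
        proof (cases "e1 < s")
          case True
          then show ?thesis using GG_inc[OF E1pos[OF tL(1,2)] E1a'[OF tL True] H(1) s1'] by simp
        next
          case False
          then have "s < e2" using H assms by simp
          then show ?thesis using GG_dec[OF s0 E2s[OF tL(1,2)] E2a'[OF tL \<open>s < e2\<close>]] assms by simp
        qed
        ultimately show "\<exists>z. (K has_real_derivative z) (at t) \<and> 0 < z"
          using KD[OF tL(1,2)] g0 by auto
      next
        show "continuous_on {x..y} K" using Kc that L0 by simp
      qed
      then show ?thesis using FFK that L0 ln2 by (simp add: divide_strict_right_mono)
    qed
    have dec: "FF s e1 p1 e2 p2 y < FF s e1 p1 e2 p2 x" if "s \<le> phi e1 e2" "L < x" "x < y" "y \<le> 0" for x y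
    proof -
      have "s*(A+B) \<le> A" using that(1) PF(1) AB by (simp add: pos_le_divide_eq)
      then have g0: "GG s e2 \<le> GG s e1" using GGd by simp
      have "K y < K x"
      proof (rule DERIV_neg_imp_decreasing_open[OF that(3)])
        fix t assume t: "x < t" "t < y"
        have tL: "L < t" "t < R" "t < 0" using t that R0 by auto
        have "GG s e1 \<le> GG s (E1 t)" using GG_inc_le[OF assms(1) E1b[OF tL(1,2)] E1s[OF tL(1,2)] s1'] tL by simp
        moreover have "GG s (E2 t) \<le> GG s e2" using GG_dec_le[OF s0 H(2) E2b[OF tL(1,2)]] E2h[OF tL(1,2)] tL by simp
        moreover have "GG s e1 < GG s (E1 t) \<or> GG s (E2 t) < GG s e2"
        proof (cases "e1 < s")
          case True
          then show ?thesis using GG_inc[OF assms(1) E1b'[OF tL True] E1s[OF tL(1,2)] s1'] by simp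
        next
          case False
          then have "s < e2" using H assms by simp
          then show ?thesis using GG_dec[OF s0 H(2) E2b'[OF tL \<open>s < e2\<close>]] E2h[OF tL(1,2)] by simp
        qed
        ultimately show "\<exists>z. (K has_real_derivative z) (at t) \<and> z < 0"
          using KD[OF tL(1,2)] g0 by auto
      next
        show "continuous_on {x..y} K" using Kc that R0 by simp
      qed
      then show ?thesis using FFK that R0 ln2 by (simp add: divide_strict_right_mono)
    qed
    show ?thesis unfolding Lb Rb
    proof (intro conjI ballI impI allI)
      show "{L<..<R} = {- p2 * (1 - 2 * e2) / (1 - 2 * s)<..<p1 * e1 / s}" unfolding L_def R_def ..
    next
      fix x assume "x \<in> {L<..<R}"
      then have x: "L < x" "x < R" by auto
      show "0 < ef s e1 p1 (- x)" using E1pos[OF x] unfolding E1_def .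
      show "ef s e1 p1 (- x) < ef s e2 p2 x" using E12[OF x] unfolding E1_def E2_def .
      show "ef s e2 p2 x < 1/2" using E2h[OF x] unfolding E2_def .
    next
      fix x y assume "s \<le> phi e1 e2" "x \<in> {L<..0} \<and> y \<in> {L<..0} \<and> x < y"
      then show "FF s e1 p1 e2 p2 y < FF s e1 p1 e2 p2 x" using dec by auto
    next
      fix x y assume "phi e1 e2 \<le> s" "x \<in> {0..<R} \<and> y \<in> {0..<R} \<and> x < y"
      then show "FF s e1 p1 e2 p2 x < FF s e1 p1 e2 p2 y" using inc by auto
    qed
  qed
  show ?thesis using ph1 ph2 main by blast
qed

end
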